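(* Let $\lambda=(\lambda_1,\ldots,\lambda_n)\in\mathbb{R}_{<0}^n$ have pairwise distinct entries. Then $\nu_{k,\lambda}(t)\ge 0$ for all $t\ge 0$ and all $k=0,\ldots,n-1$.
   Context: $V_\lambda$ is the $n\times n$ Vandermonde matrix with $(i,j)$ entry $\lambda_j^{i-1}$, and the Vandermonde basis functions are defined by $[\nu_{0,\lambda}(t),\ldots,\nu_{n-1,\lambda}(t)]=[e^{\lambda_1 t},\ldots,e^{\lambda_n t}]V_\lambda^{-1}$. *)

theory Defs
  imports Complex_Main "Jordan_Normal_Form.Matrix"
begin

text \<open>Vandermonde matrix, 0-indexed: entry (i,j) is lam j ^ i, i,j < n.
  This is the paper's (i,j) entry lambda_j^(i-1) with 1-based indices.\<close>
definition vandermonde :: "nat \<Rightarrow> (nat \<Rightarrow> real) \<Rightarrow> real mat" where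
  "vandermonde n lam = mat n n (\<lambda>(i, j). lam j ^ i)"

definition vandermonde_inv :: "nat \<Rightarrow> (nat \<Rightarrow> real) \<Rightarrow> real mat" where
  "vandermonde_inv n lam = (SOME W. W \<in> carrier_mat n n \<and>
      vandermonde n lam * W = 1\<^sub>m n \<and> W * vandermonde n lam = 1\<^sub>m n)"

text \<open>Vandermonde basis functions: the row vector [exp(lam_0 t), ..., exp(lam_(n-1) t)]
  times V^{-1}; nu k t is its k-th entry (k = 0..n-1).\<close>
definition vandermonde_basis :: "nat \<Rightarrow> (nat \<Rightarrow> real) \<Rightarrow> nat \<Rightarrow> real \<Rightarrow> real" where
  "vandermonde_basis n lam k t =
     (row (mat 1 n (\<lambda>(_, j). exp (lam j * t)) * vandermonde_inv n lam) 0) $ k"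

end

theory Submission
  imports Defs "HOL-Computational_Algebra.Polynomial" "Jordan_Normal_Form.Determinant"
begin

fun wc :: "(nat \<Rightarrow> real) \<Rightarrow> nat \<Rightarrow> nat \<Rightarrow> real" where
  "wc lam 0 i = (if i = 0 then 1 else 0)"
| "wc lam (Suc m) i = (if i \<le> m then wc lam m i / (lam i - lam (Suc m))
     else if i = Suc m then - (\<Sum>l\<le>m. wc lam m l / (lam l - lam (Suc m))) else 0)"

definition dd :: "(nat \<Rightarrow> real) \<Rightarrow> nat \<Rightarrow> real \<Rightarrow> real" where
  "dd lam m s = (\<Sum>i\<le>m. wc lam m i * exp (lam i * s))"

definition dd' :: "(nat \<Rightarrow> real) \<Rightarrow> nat \<Rightarrow> real \<Rightarrow> real" where
  "dd' lam m s = (\<Sum>i\<le>m. wc lam m i * (lam i * exp (lam i * s)))"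

lemma dd_deriv: "(dd lam m has_real_derivative dd' lam m s) (at s)"
  unfolding dd_def dd'_def
  by (auto intro!: derivative_eq_intros sum.cong simp: algebra_simps)

lemma dd_0: "dd lam 0 s = exp (lam 0 * s)"
  by (simp add: dd_def)

lemma dd'_0: "dd' lam 0 s = lam 0 * dd lam 0 s"
  by (simp add: dd_def dd'_def)

lemma dd_Suc_0: "dd lam (Suc m) 0 = 0"
proof -
  have "dd lam (Suc m) 0 = (\<Sum>i\<le>m. wc lam (Suc m) i) + wc lam (Suc m) (Suc m)"
    by (simp add: dd_def)
  also have "(\<Sum>i\<le>m. wc lam (Suc m) i) = (\<Sum>l\<le>m. wc lam m l / (lam l - lam (Suc m)))"
    by (rule sum.cong) auto
  finally show ?thesis by simp
qed

lemma dd'_Suc: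
  assumes "inj_on lam {..Suc m}"
  shows "dd' lam (Suc m) s = lam (Suc m) * dd lam (Suc m) s + dd lam m s"
proof -
  have "dd' lam (Suc m) s - lam (Suc m) * dd lam (Suc m) s
     = (\<Sum>i\<le>Suc m. wc lam (Suc m) i * (lam i - lam (Suc m)) * exp (lam i * s))"
    by (simp add: dd_def dd'_def sum_distrib_left sum_subtractf[symmetric] algebra_simps del: sum.atMost_Suc)
  also have "\<dots> = (\<Sum>i\<le>m. wc lam (Suc m) i * (lam i - lam (Suc m)) * exp (lam i * s))"
    by simp
  also have "\<dots> = (\<Sum>i\<le>m. wc lam m i * exp (lam i * s))"
  proof (rule sum.cong)
    fix i assume i: "i \<in> {..m}"
    have "lam i \<noteq> lam (Suc m)" using assms i by (auto dest: inj_onD)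
    then show "wc lam (Suc m) i * (lam i - lam (Suc m)) * exp (lam i * s) = wc lam m i * exp (lam i * s)"
      using i by simp
  qed simp
  finally show ?thesis by (simp add: dd_def)
qed

lemma dd_nonneg:
  assumes "inj_on lam {..m}" "s \<ge> 0"
  shows "dd lam m s \<ge> 0"
  using assms
proof (induction m arbitrary: s)
  case 0
  then show ?case by (simp add: dd_0)
next
  case (Suc m)
  define L where "L = lam (Suc m)"
  define g where "g = (\<lambda>x. exp (- L * x) * dd lam (Suc m) x)"
  have inj: "inj_on lam {..m}" using Suc.prems by (auto intro: inj_on_subset)
  have gd: "(g has_real_derivative exp (- L * x) * dd lam m x) (at x)" for x
  proof -
    have "(g has_real_derivative (- L * exp (- L * x)) * dd lam (Suc m) x + exp (- L * x) * dd' lam (Suc m) x) (at x)"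
      unfolding g_def by (auto intro!: derivative_eq_intros dd_deriv)
    then show ?thesis using dd'_Suc[OF Suc.prems(1), of x] by (simp add: L_def algebra_simps)
  qed
  have "g 0 \<le> g s"
  proof (rule DERIV_nonneg_imp_increasing_open[of 0 s])
    show "0 \<le> s" by fact
    fix x assume "0 < x" "x < s"
    then show "\<exists>y. (g has_real_derivative y) (at x) \<and> 0 \<le> y"
      using gd Suc.IH[OF inj, of x] by (intro exI[of _ "exp (- L * x) * dd lam m x"]) auto
  next
    show "continuous_on {0..s} g"
      using gd by (meson DERIV_continuous continuous_at_imp_continuous_on)
  qed
  then have "0 \<le> g s" by (simp add: g_def dd_Suc_0)
  then show ?case by (simp add: g_def zero_le_mult_iff)
qed

definition PP :: "(nat \<Rightarrow> real) \<Rightarrow> nat \<Rightarrow> real \<Rightarrow> real" where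
  "PP lam m x = (\<Prod>i<m. (x - lam i))"

lemma sum_ident:
  assumes "inj_on lam {..N}"
  shows "(\<Sum>m<Suc N. dd' lam m s * PP lam m x)
     = x * (\<Sum>m<Suc N. dd lam m s * PP lam m x) - dd lam N s * PP lam (Suc N) x"
  using assms
proof (induction N)
  case 0
  then show ?case by (simp add: dd'_0 PP_def algebra_simps)
next
  case (Suc N)
  have inj: "inj_on lam {..N}" using Suc.prems by (auto intro: inj_on_subset)
  have "PP lam (Suc (Suc N)) x = PP lam (Suc N) x * (x - lam (Suc N))"
    by (simp add: PP_def)
  then show ?case
    by (simp only: sum.lessThan_Suc[of _ "Suc N"] Suc.IH[OF inj] dd'_Suc[OF Suc.prems, of s])
      (simp add: algebra_simps)
qed

lemma interp:
  assumes "inj_on lam {..<n}" "j < n"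
  shows "(\<Sum>m<n. dd lam m s * PP lam m (lam j)) = exp (lam j * s)"
proof -
  obtain N where n: "n = Suc N" using assms(2) by (cases n) auto
  have inj: "inj_on lam {..N}" using assms(1) n by (simp add: lessThan_Suc_atMost)
  define x where "x = lam j"
  define u where "u = (\<lambda>s. \<Sum>m<n. dd lam m s * PP lam m x)"
  have PN: "PP lam (Suc N) x = 0"
    unfolding PP_def x_def by (rule prod_zero) (use assms(2) n in auto)
  have ud: "(u has_real_derivative x * u s) (at s)" for s
  proof -
    have "(u has_real_derivative (\<Sum>m<n. dd' lam m s * PP lam m x)) (at s)"
      unfolding u_def by (auto intro!: derivative_eq_intros dd_deriv)
    then show ?thesis using sum_ident[OF inj, of s x] PN by (simp add: n u_def)
  qed
  define v where "v = (\<lambda>s. exp (- x * s) * u s)"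
  have vd: "(v has_real_derivative 0) (at s)" for s
  proof -
    have "(v has_real_derivative (- x * exp (- x * s)) * u s + exp (- x * s) * (x * u s)) (at s)"
      unfolding v_def by (auto intro!: derivative_eq_intros ud)
    then show ?thesis by (simp add: algebra_simps)
  qed
  have "v s = v 0" using vd DERIV_isconst_all by blast
  also have "v 0 = u 0" by (simp add: v_def)
  also have "u 0 = (\<Sum>m<Suc N. dd lam m 0 * PP lam m x)" by (simp add: u_def n)
  also have "\<dots> = dd lam 0 0 * PP lam 0 x"
    by (subst sum.lessThan_Suc_shift) (simp add: dd_Suc_0)
  also have "\<dots> = 1" by (simp add: dd_0 PP_def)
  finally show ?thesis by (simp add: v_def u_def x_def field_simps exp_minus)
qed

definition NP :: "(nat \<Rightarrow> real) \<Rightarrow> nat \<Rightarrow> real poly" where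
  "NP lam m = (\<Prod>i<m. [:- lam i, 1:])"

lemma poly_NP: "poly (NP lam m) x = PP lam m x"
  by (simp add: NP_def PP_def poly_prod)

lemma degree_NP: "degree (NP lam m) \<le> m"
proof -
  have "degree (NP lam m) \<le> (\<Sum>i<m. degree [:- lam i, 1:])"
    unfolding NP_def using degree_prod_sum_le[of "{..<m}" "\<lambda>i. [:- lam i, 1:]"] by (simp add: o_def)
  then show ?thesis by simp
qed

lemma coeff_mult_nonneg:
  fixes p q :: "real poly"
  assumes "\<And>k. coeff p k \<ge> 0" "\<And>k. coeff q k \<ge> 0"
  shows "coeff (p * q) k \<ge> 0"
  unfolding coeff_mult by (rule sum_nonneg) (simp add: assms)

lemma coeff_NP_nonneg:
  assumes "\<And>i. i < m \<Longrightarrow> lam i < 0"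
  shows "coeff (NP lam m) k \<ge> 0"
  using assms
proof (induction m arbitrary: k)
  case 0
  then show ?case by (simp add: NP_def coeff_1)
next
  case (Suc m)
  have lin: "coeff [:- lam m, 1:] j \<ge> 0" for j
    using Suc.prems[of m] by (cases j) (auto simp: coeff_pCons split: nat.split)
  have "NP lam (Suc m) = NP lam m * [:- lam m, 1:]" by (simp add: NP_def)
  have ih: "\<And>k. coeff (NP lam m) k \<ge> 0" using Suc.IH Suc.prems by simp
  show ?case unfolding \<open>NP lam (Suc m) = _\<close> by (rule coeff_mult_nonneg[OF ih lin])
qed

lemma poly_as_sum:
  fixes p :: "real poly"
  assumes "degree p < n"
  shows "poly p x = (\<Sum>k<n. coeff p k * x ^ k)"
proof -
  have "poly p x = (\<Sum>k\<le>degree p. coeff p k * x ^ k)" by (rule poly_altdef)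
  also have "\<dots> = (\<Sum>k<n. coeff p k * x ^ k)"
    by (rule sum.mono_neutral_left) (use assms in \<open>auto simp: coeff_eq_0\<close>)
  finally show ?thesis .
qed

lemma lagrange_exists:
  assumes "inj_on lam {..<n}" "j < n"
  shows "\<exists>p :: real poly. degree p < n \<and> (\<forall>k<n. poly p (lam k) = (if k = j then 1 else 0))"
proof -
  define c where "c = (\<Prod>i\<in>{..<n}-{j}. (lam j - lam i))"
  define p where "p = smult (1 / c) (\<Prod>i\<in>{..<n}-{j}. [:- lam i, 1:])"
  have "degree p \<le> (\<Sum>i\<in>{..<n}-{j}. degree [:- lam i, 1:])"
    unfolding p_def using degree_prod_sum_le[of "{..<n}-{j}" "\<lambda>i. [:- lam i, 1:]"]
    by (simp add: o_def)
  also have "\<dots> = card ({..<n}-{j})" by simp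
  also have "\<dots> < n" using assms(2) by (simp add: card_Diff_singleton)
  finally have deg: "degree p < n" .
  have c0: "c \<noteq> 0" unfolding c_def
    using assms by (auto dest: inj_onD)
  have "poly p (lam k) = (if k = j then 1 else 0)" if k: "k < n" for k
  proof (cases "k = j")
    case True
    then show ?thesis using c0 by (simp add: p_def poly_prod c_def)
  next
    case False
    have "(\<Prod>i\<in>{..<n}-{j}. (lam k - lam i)) = 0"
      by (rule prod_zero) (use k False in auto)
    then show ?thesis using False by (simp add: p_def poly_prod)
  qed
  then show ?thesis using deg by blast
qed


lemma vandermonde_carrier: "vandermonde n lam \<in> carrier_mat n n"
  by (simp add: vandermonde_def)

lemma vandermonde_inv_ok:
  assumes "inj_on lam {..<n}"
  shows "vandermonde_inv n lam \<in> carrier_mat n n \<and>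
      vandermonde n lam * vandermonde_inv n lam = 1\<^sub>m n \<and>
      vandermonde_inv n lam * vandermonde n lam = 1\<^sub>m n"
proof -
  have "\<forall>j. \<exists>p :: real poly. j < n \<longrightarrow> degree p < n \<and> (\<forall>k<n. poly p (lam k) = (if k = j then 1 else 0))"
    using lagrange_exists[OF assms] by blast
  then obtain L where L: "\<And>j. j < n \<Longrightarrow> degree (L j) < n \<and> (\<forall>k<n. poly (L j) (lam k) = (if k = j then 1 else 0))"
    by metis
  define W where "W = mat n n (\<lambda>(j, l). coeff (L j) l)"
  let ?V = "vandermonde n lam"
  have W: "W \<in> carrier_mat n n" by (simp add: W_def)
  have WV: "W * ?V = 1\<^sub>m n"
  proof (rule eq_matI)
    fix j k assume j: "j < dim_row (1\<^sub>m n)" and k: "k < dim_col (1\<^sub>m n)"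
    have "(W * ?V) $$ (j, k) = (\<Sum>l<n. coeff (L j) l * lam k ^ l)"
      using j k by (simp add: W_def vandermonde_def scalar_prod_def atLeast0LessThan)
    also have "\<dots> = poly (L j) (lam k)" using L[of j] j by (intro poly_as_sum[symmetric]) simp
    also have "\<dots> = 1\<^sub>m n $$ (j, k)" using L[of j] j k by simp
    finally show "(W * ?V) $$ (j, k) = 1\<^sub>m n $$ (j, k)" .
  qed (auto simp: W_def vandermonde_def)
  have VW: "?V * W = 1\<^sub>m n"
    by (rule mat_mult_left_right_inverse[OF W vandermonde_carrier WV])
  show ?thesis unfolding vandermonde_inv_def
    by (rule someI[of _ W]) (use W WV VW in auto)
qed

theorem proposition6:
  fixes n :: nat and lam :: "nat \<Rightarrow> real"
  assumes neg: "\<And>j. j < n \<Longrightarrow> lam j < 0"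
    and distinct: "inj_on lam {..<n}"
  shows "\<forall>t \<ge> 0. \<forall>k < n. vandermonde_basis n lam k t \<ge> 0"
proof (intro allI impI)
  fix t :: real and k :: nat
  assume t: "t \<ge> 0" and k: "k < n"
  define Q where "Q = (\<Sum>m<n. smult (dd lam m t) (NP lam m))"
  have degQ: "degree Q < n"
    unfolding Q_def
  proof (rule degree_sum_less)
    fix m assume "m \<in> {..<n}"
    then show "degree (smult (dd lam m t) (NP lam m)) < n"
      using degree_NP[of lam m] degree_smult_le[of "dd lam m t" "NP lam m"] by simp
  qed (use k in simp)
  have interpQ: "poly Q (lam j) = exp (lam j * t)" if "j < n" for j
    using interp[OF distinct that, of t] by (simp add: Q_def poly_sum poly_NP)
  have nonnegQ: "coeff Q k \<ge> 0"
    unfolding Q_def coeff_sum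
  proof (rule sum_nonneg)
    fix m assume m: "m \<in> {..<n}"
    have "inj_on lam {..m}" using distinct m by (auto intro: inj_on_subset)
    then have "dd lam m t \<ge> 0" using dd_nonneg t by blast
    moreover have "coeff (NP lam m) k \<ge> 0" using m neg by (intro coeff_NP_nonneg) auto
    ultimately show "coeff (smult (dd lam m t) (NP lam m)) k \<ge> 0" by simp
  qed
  let ?V = "vandermonde n lam"
  let ?W = "vandermonde_inv n lam"
  define E where "E = mat 1 n (\<lambda>(_, j). exp (lam j * t))"
  define A where "A = mat 1 n (\<lambda>(_, l). coeff Q l)"
  have inv: "?W \<in> carrier_mat n n" "?V * ?W = 1\<^sub>m n"
    using vandermonde_inv_ok[OF distinct] by auto
  have AV: "A * ?V = E"
  proof (rule eq_matI)
    fix i j assume i: "i < dim_row E" and j: "j < dim_col E"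
    have "(A * ?V) $$ (i, j) = (\<Sum>l<n. coeff Q l * lam j ^ l)"
      using i j by (simp add: A_def E_def vandermonde_def scalar_prod_def atLeast0LessThan)
    also have "\<dots> = poly Q (lam j)" using degQ by (simp add: poly_as_sum)
    also have "\<dots> = E $$ (i, j)" using i j interpQ by (simp add: E_def)
    finally show "(A * ?V) $$ (i, j) = E $$ (i, j)" .
  qed (auto simp: A_def E_def vandermonde_def)
  have A: "A \<in> carrier_mat 1 n" by (simp add: A_def)
  have "E * ?W = A * (?V * ?W)"
    unfolding AV[symmetric] using A vandermonde_carrier inv(1) by (rule assoc_mult_mat)
  also have "\<dots> = A" using inv(2) A by simp
  finally have EW: "E * ?W = A" .
  have "vandermonde_basis n lam k t = (E * ?W) $$ (0, k)"
    unfolding vandermonde_basis_def E_def[symmetric] using k inv(1) by (simp add: E_def)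
  also have "\<dots> = coeff Q k" using EW k by (simp add: A_def)
  finally show "vandermonde_basis n lam k t \<ge> 0" using nonnegQ by simp
qed

end
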